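(* Let $\mathbb{K}$ be a field, $n>1$, $a=\sum_{j=0}^d c_j s^j\in\mathbb{K}[s]^n$ a non-zero row vector of degree $d$ ($c_j\in\mathbb{K}^n$ row vectors), and $A\in\mathbb{K}^{(2d+1)\times n(d+1)}$ the matrix whose $(i,\,kn+r)$ entry ($1\le i\le 2d+1$, $0\le k\le d$, $1\le r\le n$) is the $r$-th entry of $c_{i-1-k}$ (zero if $i-1-k\notin\{0,\dots,d\}$). If $b_1,\dots,b_l$ is a basis of $\ker(A)$, then $\mathrm{syz}(a)=\langle b_1^\flat,\dots,b_l^\flat\rangle_{\mathbb{K}[s]}$.
   Context: For $v\in\mathbb{K}^{n(d+1)}$ written in blocks $v=[w_0;\dots;w_d]$ with $w_i\in\mathbb{K}^n$, $v^\flat=\sum_{i=0}^d s^i w_i\in\mathbb{K}[s]^n$. $\mathrm{syz}(a)=\{h\in\mathbb{K}[s]^n\mid a\,h=0\}$ ($h$ column vectors), and $\langle\cdot\rangle_{\mathbb{K}[s]}$ denotes the $\mathbb{K}[s]$-module generated. *)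

theory Defs
  imports "HOL-Computational_Algebra.Polynomial" "Jordan_Normal_Form.Matrix_Kernel"
begin

definition vec_degree :: "'a::zero poly vec \<Rightarrow> nat" where
  "vec_degree a = Max ((\<lambda>r. degree (a $ r)) ` {..<dim_vec a})"

text \<open>The (2d+1) x n(d+1) coefficient matrix, 0-indexed: row i (paper i+1),
  column k*n+r (paper column kn+(r+1)) holds entry r of c_(i-k), zero if i-k is not in 0..d.\<close>
definition coeff_matrix :: "nat \<Rightarrow> nat \<Rightarrow> 'a::zero poly vec \<Rightarrow> 'a mat" where
  "coeff_matrix n d a = mat (2*d+1) (n*(d+1))
     (\<lambda>(i,j). if j div n \<le> i \<and> i - j div n \<le> d then coeff (a $ (j mod n)) (i - j div n) else 0)"

definition flat :: "nat \<Rightarrow> nat \<Rightarrow> 'a::comm_semiring_1 vec \<Rightarrow> 'a poly vec" where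
  "flat n d v = vec n (\<lambda>r. \<Sum>i\<le>d. monom (v $ (i*n + r)) i)"

definition syz :: "'a::comm_semiring_1 poly vec \<Rightarrow> 'a poly vec set" where
  "syz a = {h \<in> carrier_vec (dim_vec a). a \<bullet> h = 0}"

definition poly_module_span :: "nat \<Rightarrow> 'a::comm_semiring_1 poly vec list \<Rightarrow> 'a poly vec set" where
  "poly_module_span n G = {h. \<exists>p :: nat \<Rightarrow> 'a poly. h = vec n (\<lambda>r. \<Sum>m<length G. p m * (G ! m) $ r)}"

end

theory Submission
  imports Defs
begin

lemma coeff_mult_monom_gen:
  "coeff (p * monom c k) i = (if k \<le> i then coeff p (i - k) * c else 0)"
  using coeff_monom_mult[of c k p i] by (auto simp: mult.commute)

lemma sum_reindex_blocks:
  fixes n m :: nat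
  shows "(\<Sum>j<n*m. f j) = (\<Sum>k<m. \<Sum>r<n. f (k*n+r))"
proof (induction m)
  case 0 then show ?case by simp
next
  case (Suc m)
  have "{..<n*Suc m} = {..<n*m} \<union> {n*m..<n*m+n}" by auto
  moreover have "sum f ({..<n*m} \<union> {n*m..<n*m+n}) = sum f {..<n*m} + sum f {n*m..<n*m+n}"
    by (rule sum.union_disjoint) auto
  ultimately have "(\<Sum>j<n*Suc m. f j) = (\<Sum>j<n*m. f j) + (\<Sum>j\<in>{n*m..<n*m+n}. f j)"
    by simp
  also have "(\<Sum>j\<in>{n*m..<n*m+n}. f j) = (\<Sum>r<n. f (m*n+r))"
    using sum.shift_bounds_nat_ivl[where g=f and m=0 and k="n*m" and n=n] by (simp add: lessThan_atLeast0 add.commute mult.commute)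
  finally show ?case using Suc by simp
qed

lemma coeff_scalar_flat:
  fixes a :: "'a::field poly vec"
  assumes a: "a \<in> carrier_vec n" and deg: "\<forall>r<n. degree (a$r) \<le> d" and n: "n > 0"
  shows "coeff (a \<bullet> flat n d v) i = (\<Sum>j<n*(d+1). (if j div n \<le> i \<and> i - j div n \<le> d then coeff (a$(j mod n)) (i - j div n) else 0) * v$j)"
proof -
  have "a \<bullet> flat n d v = (\<Sum>r<n. a$r * (\<Sum>k\<le>d. monom (v$(k*n+r)) k))"
    using a by (simp add: scalar_prod_def flat_def lessThan_atLeast0)
  then have "coeff (a \<bullet> flat n d v) i = (\<Sum>r<n. \<Sum>k\<le>d. (if k \<le> i then coeff (a$r) (i-k) * v$(k*n+r) else 0))"
    by (simp add: coeff_sum sum_distrib_left coeff_mult_monom_gen)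
  also have "\<dots> = (\<Sum>k\<le>d. \<Sum>r<n. (if k \<le> i then coeff (a$r) (i-k) * v$(k*n+r) else 0))"
    by (rule sum.swap)
  also have "\<dots> = (\<Sum>k<d+1. \<Sum>r<n. (if (k*n+r) div n \<le> i \<and> i - (k*n+r) div n \<le> d then coeff (a$((k*n+r) mod n)) (i - (k*n+r) div n) else 0) * v$(k*n+r))"
  proof (rule sum.cong)
    show "{..d} = {..<d+1}" by auto
  next
    fix k assume "k \<in> {..<d+1}"
    show "(\<Sum>r<n. (if k \<le> i then coeff (a$r) (i-k) * v$(k*n+r) else 0)) = (\<Sum>r<n. (if (k*n+r) div n \<le> i \<and> i - (k*n+r) div n \<le> d then coeff (a$((k*n+r) mod n)) (i - (k*n+r) div n) else 0) * v$(k*n+r))"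
    proof (rule sum.cong[OF refl])
      fix r assume r: "r \<in> {..<n}"
      have dm: "(k*n+r) div n = k" "(k*n+r) mod n = r" using r n by auto
      have "k \<le> i \<Longrightarrow> \<not> i - k \<le> d \<Longrightarrow> coeff (a$r) (i-k) = 0"
        using deg r by (intro coeff_eq_0) force
      then show "(if k \<le> i then coeff (a$r) (i-k) * v$(k*n+r) else 0) = (if (k*n+r) div n \<le> i \<and> i - (k*n+r) div n \<le> d then coeff (a$((k*n+r) mod n)) (i - (k*n+r) div n) else 0) * v$(k*n+r)"
        unfolding dm by auto
    qed
  qed
  also have "\<dots> = (\<Sum>j<n*(d+1). (if j div n \<le> i \<and> i - j div n \<le> d then coeff (a$(j mod n)) (i - j div n) else 0) * v$j)"
    by (rule sum_reindex_blocks[symmetric])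
  finally show ?thesis .
qed

lemma kernel_iff:
  fixes a :: "'a::field poly vec"
  assumes a: "a \<in> carrier_vec n" and deg: "\<forall>r<n. degree (a$r) \<le> d" and n: "n > 0"
    and v: "v \<in> carrier_vec (n*(d+1))"
  shows "coeff_matrix n d a *\<^sub>v v = 0\<^sub>v (2*d+1) \<longleftrightarrow> a \<bullet> flat n d v = 0"
proof -
  have row: "(coeff_matrix n d a *\<^sub>v v) $ i = coeff (a \<bullet> flat n d v) i" if "i < 2*d+1" for i
    using that v unfolding coeff_scalar_flat[OF a deg n]
    by (simp add: coeff_matrix_def scalar_prod_def lessThan_atLeast0 row_def)
  have hi: "coeff (a \<bullet> flat n d v) i = 0" if "i \<ge> 2*d+1" for i
    unfolding coeff_scalar_flat[OF a deg n]
  proof (rule sum.neutral, intro ballI)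
    fix j assume "j \<in> {..<n*(d+1)}"
    then have "j < (d+1)*n" by (simp add: mult.commute)
    then have "j div n < d+1" by (rule less_mult_imp_div_less)
    then have "j div n \<le> d" by simp
    then show "(if j div n \<le> i \<and> i - j div n \<le> d then coeff (a$(j mod n)) (i - j div n) else 0) * v$j = 0"
      using that by auto
  qed
  show ?thesis
  proof
    assume "coeff_matrix n d a *\<^sub>v v = 0\<^sub>v (2*d+1)"
    then have "coeff (a \<bullet> flat n d v) i = 0" for i
      using row[of i] hi[of i] by (cases "i < 2*d+1") (auto simp: coeff_matrix_def)
    then show "a \<bullet> flat n d v = 0" by (simp add: poly_eq_iff)
  next
    assume "a \<bullet> flat n d v = 0"
    then show "coeff_matrix n d a *\<^sub>v v = 0\<^sub>v (2*d+1)"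
      using row by (intro eq_vecI) (auto simp: coeff_matrix_def)
  qed
qed

lemma flat_unfl:
  assumes h: "h \<in> carrier_vec n" and deg: "\<forall>r<n. degree (h$r) \<le> d" and n: "n > 0"
  shows "flat n d (vec (n*(d+1)) (\<lambda>j. coeff (h$(j mod n)) (j div n))) = h"
proof (rule eq_vecI)
  show "dim_vec (flat n d (vec (n*(d+1)) (\<lambda>j. coeff (h$(j mod n)) (j div n)))) = dim_vec h"
    using h by (simp add: flat_def)
next
  fix r assume "r < dim_vec h"
  then have r: "r < n" using h by simp
  have "flat n d (vec (n*(d+1)) (\<lambda>j. coeff (h$(j mod n)) (j div n))) $ r
      = (\<Sum>i\<le>d. monom (vec (n*(d+1)) (\<lambda>j. coeff (h$(j mod n)) (j div n)) $ (i*n+r)) i)"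
    using r by (simp add: flat_def)
  also have "\<dots> = (\<Sum>i\<le>d. monom (coeff (h$r) i) i)"
  proof (rule sum.cong[OF refl])
    fix i assume "i \<in> {..d}"
    then have "i*n + r < n*(d+1)"
    proof -
      assume "i \<in> {..d}"
      then have "i*n \<le> d*n" by simp
      then have "r + i*n < n + d*n" using r by linarith
      then show ?thesis by (simp add: algebra_simps)
    qed
    then show "monom (vec (n*(d+1)) (\<lambda>j. coeff (h$(j mod n)) (j div n)) $ (i*n+r)) i = monom (coeff (h$r) i) i"
      using r n by simp
  qed
  also have "\<dots> = h $ r" using deg r by (intro poly_as_sum_of_monoms') auto
  finally show "flat n d (vec (n*(d+1)) (\<lambda>j. coeff (h$(j mod n)) (j div n))) $ r = h $ r" .
qed

lemma smult_sum_right: "Polynomial.smult c (\<Sum>i\<in>S. f i) = (\<Sum>i\<in>S. Polynomial.smult c (f i))"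
  by (induct S rule: infinite_finite_induct) (auto simp: smult_add_right)

lemma flat_lincomb:
  assumes v: "\<forall>j<n*(d+1). v$j = (\<Sum>m<L. c m * (B m)$j)" and r: "r < n"
  shows "flat n d v $ r = (\<Sum>m<L. [:c m:] * flat n d (B m) $ r)"
proof -
  have "flat n d v $ r = (\<Sum>i\<le>d. monom (\<Sum>m<L. c m * (B m)$(i*n+r)) i)"
  proof -
    have "flat n d v $ r = (\<Sum>i\<le>d. monom (v$(i*n+r)) i)" using r by (simp add: flat_def)
    also have "\<dots> = (\<Sum>i\<le>d. monom (\<Sum>m<L. c m * (B m)$(i*n+r)) i)"
    proof (rule sum.cong[OF refl])
      fix i assume "i \<in> {..d}"
      then have "i*n \<le> d*n" by simp
      then have "r + i*n < n + d*n" using r by linarith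
      then have "i*n + r < n*(d+1)" by (simp add: algebra_simps)
      then show "monom (v$(i*n+r)) i = monom (\<Sum>m<L. c m * (B m)$(i*n+r)) i" using v by simp
    qed
    finally show ?thesis .
  qed
  also have "\<dots> = (\<Sum>i\<le>d. \<Sum>m<L. Polynomial.smult (c m) (monom ((B m)$(i*n+r)) i))"
    by (simp add: monom_sum smult_monom)
  also have "\<dots> = (\<Sum>m<L. Polynomial.smult (c m) (\<Sum>i\<le>d. monom ((B m)$(i*n+r)) i))"
    by (subst sum.swap) (simp add: smult_sum_right)
  also have "\<dots> = (\<Sum>m<L. [:c m:] * flat n d (B m) $ r)"
    using r by (simp add: flat_def)
  finally show ?thesis .
qed

lemma bezout_vec:
  fixes a :: "'a::field poly vec"
  assumes a: "a \<in> carrier_vec n" and a0: "a \<noteq> 0\<^sub>v n"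
  shows "\<exists>g u. g \<noteq> 0 \<and> (\<Sum>j<n. u j * a$j) = g \<and> (\<forall>j<n. g dvd a$j)"
proof -
  let ?S = "\<lambda>u. (\<Sum>j<n. u j * a$j)"
  let ?P = "\<lambda>k. \<exists>u. ?S u \<noteq> 0 \<and> degree (?S u) = k"
  obtain j0 where j0: "j0 < n" "a$j0 \<noteq> 0"
    using a a0 by (metis eq_vecI carrier_vecD index_zero_vec(1) index_zero_vec(2))
  have Sdelta: "?S (\<lambda>i. if i = j then 1 else 0) = a$j" if "j < n" for j
    using that by (subst sum.cong[OF refl, where h="\<lambda>i. if i = j then a$i else 0"]) auto
  have "?P (degree (a$j0))"
    using Sdelta[OF j0(1)] j0 by metis
  then have "?P (LEAST k. ?P k)" by (rule LeastI)
  then obtain u where u: "?S u \<noteq> 0" "degree (?S u) = (LEAST k. ?P k)" by blast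
  define g where "g = ?S u"
  have "g dvd a$j" if j: "j < n" for j
  proof (rule ccontr)
    assume nd: "\<not> g dvd a$j"
    then have m0: "a$j mod g \<noteq> 0" by (simp add: dvd_eq_mod_eq_0)
    have g0: "g \<noteq> 0" using u g_def by simp
    have "a$j mod g = a$j - (a$j div g) * g" by (simp add: minus_div_mult_eq_mod)
    also have "\<dots> = ?S (\<lambda>i. (if i = j then 1 else 0) - (a$j div g) * u i)"
      unfolding g_def using Sdelta[OF j]
      by (simp add: left_diff_distrib sum_subtractf sum_distrib_left mult.assoc)
    finally have "?P (degree (a$j mod g))" using m0 by metis
    then have "(LEAST k. ?P k) \<le> degree (a$j mod g)" by (rule Least_le)
    moreover have "degree (a$j mod g) < degree g" using degree_mod_less'[OF g0 m0] .
    ultimately show False using u g_def by simp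
  qed
  then show ?thesis using u g_def by blast
qed

theorem lemma5:
  fixes a :: "'a::field poly vec" and n d :: nat and bs :: "'a vec list"
  assumes "n > 1"
    and "a \<in> carrier_vec n"
    and "a \<noteq> 0\<^sub>v n"
    and "d = vec_degree a"
    and "distinct bs"
    and "kernel.basis (n*(d+1)) (coeff_matrix n d a) (set bs)"
  shows "syz a = poly_module_span n (map (flat n d) bs)"
proof -
  note aC = assms(2)
  have n0: "n > 0" using assms(1) by simp
  define A where "A = coeff_matrix n d a"
  have A: "A \<in> carrier_mat (2*d+1) (n*(d+1))" by (simp add: A_def coeff_matrix_def)
  interpret K: kernel "2*d+1" "n*(d+1)" A by unfold_locales (rule A)
  have deg: "\<forall>r<n. degree (a$r) \<le> d"
  proof (intro allI impI)
    fix r assume "r < n"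
    then show "degree (a$r) \<le> d" unfolding assms(4) vec_degree_def using aC
      by (intro Max_ge) auto
  qed
  have B: "K.basis (set bs)" using assms(6) by (simp add: A_def)
  from B have bsK: "set bs \<subseteq> mat_kernel A" and gen: "K.span (set bs) = mat_kernel A"
    unfolding K.Ker.basis_def by auto
  have bsC: "set bs \<subseteq> carrier_vec (n*(d+1))" using bsK mat_kernel_carrier[OF A] by auto
  have span_eq: "mat_kernel A = K.NC.span_list bs"
    using gen K.span_same[OF bsK] K.NC.span_list_as_span[OF bsC] by simp
  have repr: "\<exists>c. \<forall>j<n*(d+1). v$j = (\<Sum>m<length bs. c m * bs!m $ j)" if v: "v \<in> mat_kernel A" for v
  proof -
    from v span_eq obtain c where vc: "v = K.NC.lincomb_list c bs"
      unfolding K.NC.span_list_def by auto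
    have "\<forall>w\<in>set bs. dim_vec w = n*(d+1)" using bsC by auto
    from K.NC.lincomb_list_as_mat_mult[OF this, of c] vc
    have "v = mat_of_cols (n*(d+1)) bs *\<^sub>v vec (length bs) c" by simp
    then have "\<forall>j<n*(d+1). v$j = (\<Sum>m<length bs. c m * bs!m $ j)"
      by (auto simp: mult_mat_vec_def scalar_prod_def lessThan_atLeast0 mult.commute mat_of_cols_def intro!: sum.cong)
    then show ?thesis by blast
  qed
  have flat_ker: "a \<bullet> flat n d b = 0" if b: "b \<in> mat_kernel A" for b
    using mat_kernelD[OF A b] kernel_iff[OF aC deg n0] unfolding A_def by blast
  show ?thesis
  proof (intro Set.set_eqI iffI)
    fix x assume "x \<in> poly_module_span n (map (flat n d) bs)"
    then obtain p where x: "x = vec n (\<lambda>r. \<Sum>m<length bs. p m * flat n d (bs!m) $ r)"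
      unfolding poly_module_span_def by auto
    have "a \<bullet> x = (\<Sum>r<n. a$r * (\<Sum>m<length bs. p m * flat n d (bs!m) $ r))"
      using aC x by (simp add: scalar_prod_def lessThan_atLeast0)
    also have "\<dots> = (\<Sum>m<length bs. p m * (\<Sum>r<n. a$r * flat n d (bs!m) $ r))"
      by (simp add: sum_distrib_left sum.swap[of _ "{..<n}"] mult.left_commute)
    also have "\<dots> = (\<Sum>m<length bs. p m * (a \<bullet> flat n d (bs!m)))"
      using aC by (simp add: scalar_prod_def lessThan_atLeast0 flat_def)
    also have "\<dots> = 0" using flat_ker bsK by (simp add: subset_iff)
    finally show "x \<in> syz a" using x aC unfolding syz_def by auto
  next
    fix h assume "h \<in> syz a"
    then have hC: "h \<in> carrier_vec n" and ah: "(\<Sum>r<n. a$r * h$r) = 0"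
      using aC unfolding syz_def by (auto simp: scalar_prod_def lessThan_atLeast0)
    obtain g u where g0: "g \<noteq> 0" and gu: "(\<Sum>j<n. u j * a$j) = g" and gd: "\<forall>j<n. g dvd a$j"
      using bezout_vec[OF aC assms(3)] by blast
    define a' where "a' j = a$j div g" for j
    have aeq: "a$j = g * a' j" if "j < n" for j
      using gd that unfolding a'_def by simp
    have "g * (\<Sum>j<n. u j * a' j) = g * 1"
      using gu aeq by (simp add: sum_distrib_left mult.left_commute)
    then have ua: "(\<Sum>j<n. u j * a' j) = 1" using g0 by simp
    have "g * (\<Sum>r<n. a' r * h$r) = g * 0"
      using ah aeq by (simp add: sum_distrib_left mult.assoc)
    then have ah': "(\<Sum>r<n. a' r * h$r) = 0" using g0 by simp
    have dega': "degree (a' j) \<le> d" if "j < n" for j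
    proof (cases "a' j = 0")
      case False
      then have "degree (a$j) = degree g + degree (a' j)" using aeq[OF that] g0 by (simp add: degree_mult_eq)
      moreover have "degree (a$j) \<le> d" using deg that by blast
      ultimately show ?thesis by linarith
    qed simp
    define Ko where "Ko i j = vec n (\<lambda>r. (if r = i then a' j else 0) - (if r = j then a' i else 0))" for i j
    have KoC: "Ko i j \<in> carrier_vec n" for i j by (simp add: Ko_def)
    have Kodeg: "\<forall>r<n. degree (Ko i j $ r) \<le> d" if "i < n" "j < n" for i j
      using that dega' by (auto simp: Ko_def intro: order.trans[OF degree_diff_le_max])
    have Koa: "a \<bullet> Ko i j = 0" if ij: "i < n" "j < n" for i j
    proof -
      have "a \<bullet> Ko i j = (\<Sum>r<n. (if r = i then a$r * a' j else 0) - (if r = j then a$r * a' i else 0))"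
        using aC by (auto simp: scalar_prod_def lessThan_atLeast0 Ko_def right_diff_distrib intro!: sum.cong)
      also have "\<dots> = a$i * a' j - a$j * a' i" using ij by (simp add: sum_subtractf)
      also have "\<dots> = 0" using aeq ij by simp
      finally show ?thesis .
    qed
    have Kospan: "\<exists>c. \<forall>r<n. Ko i j $ r = (\<Sum>m<length bs. [:c m:] * flat n d (bs!m) $ r)"
      if ij: "i < n" "j < n" for i j
    proof -
      define v where "v = vec (n*(d+1)) (\<lambda>k. coeff (Ko i j $(k mod n)) (k div n))"
      have fv: "flat n d v = Ko i j" unfolding v_def by (rule flat_unfl[OF KoC Kodeg[OF ij] n0])
      have vC: "v \<in> carrier_vec (n*(d+1))" by (simp add: v_def)
      have "v \<in> mat_kernel A"
        using kernel_iff[OF aC deg n0 vC] fv Koa[OF ij] A vC unfolding A_def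
        by (auto intro: mat_kernelI)
      from repr[OF this] obtain c where "\<forall>k<n*(d+1). v$k = (\<Sum>m<length bs. c m * bs!m $ k)" by blast
      from flat_lincomb[OF this] fv show ?thesis by metis
    qed
    define C where "C i j = (SOME c. \<forall>r<n. Ko i j $ r = (\<Sum>m<length bs. [:c m:] * flat n d (bs!m) $ r))" for i j
    have CK: "Ko i j $ r = (\<Sum>m<length bs. [:C i j m:] * flat n d (bs!m) $ r)" if "i < n" "j < n" "r < n" for i j r
      using someI_ex[OF Kospan[OF that(1,2)]] that(3) unfolding C_def by blast
    have decomp: "h$r = (\<Sum>i<n. \<Sum>j<n. u j * h$i * Ko i j $ r)" if r: "r < n" for r
    proof -
      have "(\<Sum>i<n. \<Sum>j<n. u j * h$i * Ko i j $ r)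
          = (\<Sum>i<n. \<Sum>j<n. (if r = i then h$r * (u j * a' j) else 0) - (if r = j then u r * (a' i * h$i) else 0))"
        using r by (auto simp: Ko_def right_diff_distrib intro!: sum.cong)
      also have "\<dots> = (\<Sum>i<n. \<Sum>j<n. (if r = i then h$r * (u j * a' j) else 0)) - (\<Sum>i<n. \<Sum>j<n. (if r = j then u r * (a' i * h$i) else 0))"
        by (simp add: sum_subtractf)
      also have "(\<Sum>i<n. \<Sum>j<n. (if r = i then h$r * (u j * a' j) else 0)) = (\<Sum>i<n. if r = i then (\<Sum>j<n. h$r * (u j * a' j)) else 0)"
        by (intro sum.cong) auto
      also have "\<dots> = h$r * (\<Sum>j<n. u j * a' j)"
        using r by (simp add: sum_distrib_left)
      also have "(\<Sum>i<n. \<Sum>j<n. (if r = j then u r * (a' i * h$i) else 0)) = u r * (\<Sum>i<n. a' i * h$i)"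
        using r by (simp add: sum_distrib_left)
      finally show ?thesis using ua ah' by simp
    qed
    define P where "P m = (\<Sum>i<n. \<Sum>j<n. u j * h$i * [:C i j m:])" for m
    have "h = vec n (\<lambda>r. \<Sum>m<length (map (flat n d) bs). P m * (map (flat n d) bs ! m) $ r)"
    proof (rule eq_vecI)
      fix r assume "r < dim_vec (vec n (\<lambda>r. \<Sum>m<length (map (flat n d) bs). P m * (map (flat n d) bs ! m) $ r))"
      then have r: "r < n" by simp
      have "(\<Sum>m<length bs. P m * flat n d (bs ! m) $ r)
          = (\<Sum>m<length bs. \<Sum>i<n. \<Sum>j<n. u j * h$i * ([:C i j m:] * flat n d (bs ! m) $ r))"
        by (simp add: P_def sum_distrib_right mult.assoc)
      also have "\<dots> = (\<Sum>i<n. \<Sum>j<n. \<Sum>m<length bs. u j * h$i * ([:C i j m:] * flat n d (bs ! m) $ r))"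
        by (simp add: sum.swap[of _ "{..<length bs}"])
      also have "\<dots> = (\<Sum>i<n. \<Sum>j<n. u j * h$i * Ko i j $ r)"
        using CK r by (simp add: sum_distrib_left)
      also have "\<dots> = h$r" using decomp[OF r] by simp
      finally show "h $ r = vec n (\<lambda>r. \<Sum>m<length (map (flat n d) bs). P m * (map (flat n d) bs ! m) $ r) $ r"
        using r by simp
    qed (use hC in simp)
    then show "h \<in> poly_module_span n (map (flat n d) bs)"
      unfolding poly_module_span_def by blast
  qed
qed

end
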